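(* Let $n\ge 3$ and let $\mathcal{A}$ be an arrangement of $(n-2)$-planes in $\mathbb{P}^n$ whose incidence graph $\Gamma(\mathcal{A})$ is isomorphic to the complete bipartite graph $K_{a,b}$ with $2 \le a \le b$. Then $\bigcap_{X\in\mathcal{A}} X$ is an $(n-4)$-dimensional linear subspace of $\mathbb{P}^n$.
   Context: A subspace arrangement is a finite collection of linear subspaces of $\mathbb{P}^n$ with no inclusions among distinct members. The incidence graph $\Gamma(\mathcal{A})$ has vertex set $\mathcal{A}$ and an edge between $X\ne Y$ iff $\dim(X\cap Y)$ exceeds the expected dimension, which for two $(n-2)$-planes in $\mathbb{P}^n$ is $n-4$ (the empty set has dimension $-1$; for $n=3$ an $(n-4)$-plane means the empty set). $K_{a,b}$ is the complete bipartite graph with parts of sizes $a$ and $b$. *)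

theory Defs
  imports "HOL-Analysis.Analysis"
begin

text \<open>Projective space P^n over a field k is modelled by the vector space k^(n+1),
  realised as the type 'k^'n with CARD('n) = n + 1.  A projective linear subspace
  is a linear subspace W of k^(n+1); its projective dimension is dim W - 1
  (so the empty projective subspace, W = 0, has dimension -1).\<close>

definition proj_dim :: "('k::field ^ 'n) set \<Rightarrow> int" where
  "proj_dim W = int (vec.dim W) - 1"

definition subspace_arrangement :: "('k::field ^ 'n) set set \<Rightarrow> bool" where
  "subspace_arrangement A \<longleftrightarrow> finite A \<and> (\<forall>X\<in>A. vec.subspace X) \<and>
     (\<forall>X\<in>A. \<forall>Y\<in>A. X \<noteq> Y \<longrightarrow> \<not> X \<subseteq> Y)"

text \<open>Incidence graph of an arrangement of (n-2)-planes in P^n: X and Y adjacent iff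
  X \<noteq> Y and the projective dimension of X \<inter> Y exceeds the expected dimension n - 4.\<close>

definition incident :: "nat \<Rightarrow> ('k::field ^ 'n) set \<Rightarrow> ('k ^ 'n) set \<Rightarrow> bool" where
  "incident n X Y \<longleftrightarrow> X \<noteq> Y \<and> proj_dim (X \<inter> Y) > int n - 4"

definition graph_iso :: "'a set \<Rightarrow> ('a \<Rightarrow> 'a \<Rightarrow> bool) \<Rightarrow> 'b set \<Rightarrow> ('b \<Rightarrow> 'b \<Rightarrow> bool) \<Rightarrow> bool" where
  "graph_iso V E W F \<longleftrightarrow> (\<exists>f. bij_betw f V W \<and> (\<forall>x\<in>V. \<forall>y\<in>V. E x y \<longleftrightarrow> F (f x) (f y)))"

definition Kab_verts :: "nat \<Rightarrow> nat \<Rightarrow> (nat + nat) set" where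
  "Kab_verts a b = Inl ` {..<a} \<union> Inr ` {..<b}"

definition Kab_edge :: "(nat + nat) \<Rightarrow> (nat + nat) \<Rightarrow> bool" where
  "Kab_edge x y \<longleftrightarrow> (\<exists>i j. (x = Inl i \<and> y = Inr j) \<or> (x = Inr j \<and> y = Inl i))"

end

theory Submission
  imports Defs
begin

lemma key_incl:
  fixes X1 X2 Y :: "('k::field ^ 'm) set" and n :: nat
  assumes sX1: "vec.subspace X1" and sX2: "vec.subspace X2" and sY: "vec.subspace Y"
    and dY: "vec.dim Y = n - 1" and d1: "vec.dim (Y \<inter> X1) \<ge> n - 2"
    and d2: "vec.dim (Y \<inter> X2) \<ge> n - 2" and d12: "vec.dim (X1 \<inter> X2) \<le> n - 3"
    and n3: "n \<ge> 3"
  shows "X1 \<inter> X2 \<subseteq> Y"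
proof -
  define S where "S = Y \<inter> X1"
  define T where "T = Y \<inter> X2"
  have sS: "vec.subspace S" unfolding S_def using sY sX1 vec.subspace_inter by blast
  have sT: "vec.subspace T" unfolding T_def using sY sX2 vec.subspace_inter by blast
  have eq: "vec.dim {x + y |x y. x \<in> S \<and> y \<in> T} + vec.dim (S \<inter> T) = vec.dim S + vec.dim T"
    using vec.dim_sums_Int[OF sS sT] .
  have sumY: "{x + y |x y. x \<in> S \<and> y \<in> T} \<subseteq> Y"
  proof (rule subsetI)
    fix z assume "z \<in> {x + y |x y. x \<in> S \<and> y \<in> T}"
    then obtain x y where "z = x + y" "x \<in> Y" "y \<in> Y" unfolding S_def T_def by blast
    thus "z \<in> Y" using vec.subspace_add[OF sY] by simp
  qed
  have "vec.dim {x + y |x y. x \<in> S \<and> y \<in> T} \<le> n - 1" using vec.dim_subset[OF sumY] dY by simp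
  hence ge: "vec.dim (S \<inter> T) \<ge> n - 3" using eq d1 d2 n3 unfolding S_def T_def by linarith
  have sub: "S \<inter> T \<subseteq> X1 \<inter> X2" unfolding S_def T_def by auto
  have "vec.dim (X1 \<inter> X2) \<le> vec.dim (S \<inter> T)" using ge d12 by linarith
  hence "vec.span (S \<inter> T) = vec.span (X1 \<inter> X2)" using vec.dim_eq_span[OF sub] by blast
  moreover have "vec.subspace (S \<inter> T)" using sS sT vec.subspace_inter by blast
  moreover have "vec.subspace (X1 \<inter> X2)" using sX1 sX2 vec.subspace_inter by blast
  ultimately have "S \<inter> T = X1 \<inter> X2" by (metis vec.span_eq_iff)
  thus ?thesis unfolding S_def T_def by auto
qed

lemma dim_int_ge:
  fixes X Y :: "('k::field ^ 'm) set" and n :: nat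
  assumes sX: "vec.subspace X" and sY: "vec.subspace Y"
    and dX: "vec.dim X = n - 1" and dY: "vec.dim Y = n - 1" and c: "CARD('m) = n + 1"
    and n3: "n \<ge> 3"
  shows "vec.dim (X \<inter> Y) \<ge> n - 3"
proof -
  have eq: "vec.dim {x + y |x y. x \<in> X \<and> y \<in> Y} + vec.dim (X \<inter> Y) = vec.dim X + vec.dim Y"
    using vec.dim_sums_Int[OF sX sY] .
  have "vec.dim {x + y |x y. x \<in> X \<and> y \<in> Y} \<le> CARD('m)" by (rule dim_subset_UNIV_cart_gen)
  hence "vec.dim {x + y |x y. x \<in> X \<and> y \<in> Y} \<le> n + 1" using c by simp
  thus ?thesis using eq dX dY n3 by linarith
qed

theorem lemma2p1:
  fixes A :: "('k::field ^ 'm) set set" and n a b :: nat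
  assumes "n \<ge> 3" and "CARD('m) = n + 1"
    and "subspace_arrangement A"
    and "\<forall>X\<in>A. proj_dim X = int n - 2"
    and "graph_iso A (incident n) (Kab_verts a b) Kab_edge"
    and "2 \<le> a" and "a \<le> b"
  shows "vec.subspace (\<Inter>A) \<and> proj_dim (\<Inter>A) = int n - 4"
proof -
  note n3 = assms(1) and card = assms(2)
  have sub: "\<And>X. X \<in> A \<Longrightarrow> vec.subspace X" using assms(3) unfolding subspace_arrangement_def by blast
  have dim: "\<And>X. X \<in> A \<Longrightarrow> vec.dim X = n - 1" using assms(4) n3 unfolding proj_dim_def by fastforce
  obtain f where bij: "bij_betw f A (Kab_verts a b)"
    and fe: "\<forall>x\<in>A. \<forall>y\<in>A. incident n x y \<longleftrightarrow> Kab_edge (f x) (f y)"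
    using assms(5) unfolding graph_iso_def by blast
  define g where "g = the_inv_into A f"
  have gA: "\<And>v. v \<in> Kab_verts a b \<Longrightarrow> g v \<in> A" using bij_betwE[OF bij_betw_the_inv_into[OF bij]] unfolding g_def by blast
  have fg: "\<And>v. v \<in> Kab_verts a b \<Longrightarrow> f (g v) = v" unfolding g_def
    by (rule f_the_inv_into_f_bij_betw[OF bij])
  have inc_dim: "\<And>X Y. X \<in> A \<Longrightarrow> Y \<in> A \<Longrightarrow> incident n X Y \<Longrightarrow> vec.dim (X \<inter> Y) \<ge> n - 2"
    unfolding incident_def proj_dim_def using n3 by auto
  have ninc_dim: "\<And>X Y. X \<in> A \<Longrightarrow> Y \<in> A \<Longrightarrow> X \<noteq> Y \<Longrightarrow> \<not> incident n X Y \<Longrightarrow> vec.dim (X \<inter> Y) \<le> n - 3"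
    unfolding incident_def proj_dim_def using n3 by auto
  have vL: "\<And>i. i < a \<Longrightarrow> Inl i \<in> Kab_verts a b" unfolding Kab_verts_def by auto
  have vR: "\<And>j. j < b \<Longrightarrow> Inr j \<in> Kab_verts a b" unfolding Kab_verts_def by auto
  define X1 where "X1 = g (Inl 0)"
  define X2 where "X2 = g (Inl 1)"
  define Y1 where "Y1 = g (Inr 0)"
  define Y2 where "Y2 = g (Inr 1)"
  have X1A: "X1 \<in> A" and X2A: "X2 \<in> A" and Y1A: "Y1 \<in> A" and Y2A: "Y2 \<in> A"
    unfolding X1_def X2_def Y1_def Y2_def using gA vL vR assms(6,7) by auto
  have fX1: "f X1 = Inl 0" and fX2: "f X2 = Inl 1" and fY1: "f Y1 = Inr 0" and fY2: "f Y2 = Inr 1"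
    unfolding X1_def X2_def Y1_def Y2_def using fg vL vR assms(6,7) by auto
  have X12: "X1 \<noteq> X2" using fX1 fX2 by auto
  have Y12: "Y1 \<noteq> Y2" using fY1 fY2 by auto
  have nX: "\<not> incident n X1 X2" using fe X1A X2A fX1 fX2 unfolding Kab_edge_def by auto
  have nY: "\<not> incident n Y1 Y2" using fe Y1A Y2A fY1 fY2 unfolding Kab_edge_def by auto
  have fcases: "\<And>X. X \<in> A \<Longrightarrow> (\<exists>i. f X = Inl i) \<or> (\<exists>j. f X = Inr j)"
    by (metis sum.exhaust)
  have LR: "\<And>X Y. X \<in> A \<Longrightarrow> Y \<in> A \<Longrightarrow> f X = Inl i \<Longrightarrow> f Y = Inr j \<Longrightarrow> vec.dim (Y \<inter> X) \<ge> n - 2"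
    for i j
  proof -
    fix X Y assume h: "X \<in> A" "Y \<in> A" "f X = Inl i" "f Y = Inr j"
    have "incident n Y X" using fe h unfolding Kab_edge_def by auto
    thus "vec.dim (Y \<inter> X) \<ge> n - 2" using inc_dim h by blast
  qed
  have incR: "\<And>Y j. Y \<in> A \<Longrightarrow> f Y = Inr j \<Longrightarrow> X1 \<inter> X2 \<subseteq> Y"
  proof -
    fix Y j assume h: "Y \<in> A" "f Y = Inr j"
    show "X1 \<inter> X2 \<subseteq> Y"
      by (rule key_incl[OF sub[OF X1A] sub[OF X2A] sub[OF h(1)] dim[OF h(1)]
            LR[OF X1A h(1) fX1 h(2)] LR[OF X2A h(1) fX2 h(2)]
            ninc_dim[OF X1A X2A X12 nX] n3])
  qed
  have incL: "\<And>X i. X \<in> A \<Longrightarrow> f X = Inl i \<Longrightarrow> Y1 \<inter> Y2 \<subseteq> X"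
  proof -
    fix X i assume h: "X \<in> A" "f X = Inl i"
    show "Y1 \<inter> Y2 \<subseteq> X"
      by (rule key_incl[OF sub[OF Y1A] sub[OF Y2A] sub[OF h(1)] dim[OF h(1)]
            _ _ ninc_dim[OF Y1A Y2A Y12 nY] n3])
        (use LR[OF h(1) Y1A h(2) fY1] LR[OF h(1) Y2A h(2) fY2] in \<open>simp add: Int_commute\<close>)+
  qed
  define L where "L = X1 \<inter> X2"
  have LY: "L \<subseteq> Y1 \<inter> Y2" unfolding L_def using incR[OF Y1A fY1] incR[OF Y2A fY2] by auto
  have YL: "Y1 \<inter> Y2 \<subseteq> L" unfolding L_def using incL[OF X1A fX1] incL[OF X2A fX2] by auto
  have inAll: "\<And>X. X \<in> A \<Longrightarrow> L \<subseteq> X"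
  proof -
    fix X assume h: "X \<in> A"
    from fcases[OF h] show "L \<subseteq> X"
    proof
      assume "\<exists>i. f X = Inl i" then obtain i where "f X = Inl i" by blast
      thus ?thesis using incL[OF h] LY by blast
    next
      assume "\<exists>j. f X = Inr j" then obtain j where "f X = Inr j" by blast
      thus ?thesis using incR[OF h] unfolding L_def by blast
    qed
  qed
  have IA: "\<Inter>A = L"
  proof
    show "\<Inter>A \<subseteq> L" unfolding L_def using X1A X2A by blast
    show "L \<subseteq> \<Inter>A" using inAll by blast
  qed
  have sL: "vec.subspace L" unfolding L_def using sub[OF X1A] sub[OF X2A] vec.subspace_inter by blast
  have d1: "vec.dim L \<le> n - 3" unfolding L_def by (rule ninc_dim[OF X1A X2A X12 nX])
  have d2: "vec.dim L \<ge> n - 3" unfolding L_def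
    by (rule dim_int_ge[OF sub[OF X1A] sub[OF X2A] dim[OF X1A] dim[OF X2A] card n3])
  have "vec.dim L = n - 3" using d1 d2 by linarith
  thus ?thesis using IA sL n3 unfolding proj_dim_def by simp
qed

end
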